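(* Let $\kappa<\kappa'$ be regular cardinals. Then the inclusion functor $\mathbf{CAMA}_{\kappa'}\hookrightarrow\mathbf{CAMA}_\kappa$ and the inclusion functor $\mathbf{MKF}_{\kappa'}\hookrightarrow\mathbf{MKF}_\kappa$ are not essentially surjective; i.e. there is an object of $\mathbf{CAMA}_\kappa$ not isomorphic to any object of $\mathbf{CAMA}_{\kappa'}$, and an object of $\mathbf{MKF}_\kappa$ not isomorphic to any object of $\mathbf{MKF}_{\kappa'}$.
   Context: A modal algebra is a Boolean algebra with a unary operation $\Diamond$ satisfying $\Diamond 0=0$ and $\Diamond(x\vee y)=\Diamond x\vee\Diamond y$; complete/atomic refer to the Boolean reduct; for a cardinal $\lambda$ it is $\lambda$-additive if $\Diamond\bigvee X=\bigvee_{x\in X}\Diamond x$ for every $X$ with $|X|<\lambda$. A homomorphism of complete modal algebras is a Boolean homomorphism preserving all joins and meets and commuting with $\Diamond$. $\mathbf{CAMA}_\lambda$ is the category of $\lambda$-additive complete atomic modal algebras with these homomorphisms. A multi-relational Kripke frame is a pair $\langle W,S\rangle$ with $W$ non-empty and $S$ a non-empty set of binary relations on $W$; it is $\lambda$-downward directed if for every $S'\subseteq S$ with $|S'|<\lambda$ there is $R\in S$ with $R\subseteq\bigcap S'$ (with $\bigcap\emptyset=W\times W$). A homomorphism $f:\langle W_1,S_1\rangle\to\langle W_2,S_2\rangle$ is a map $f:W_1\to W_2$ such that: (i) for every $x\in W_1$ and $R_2\in S_2$ there is $R_1\in S_1$ such that for all $y\in W_1$, $xR_1y$ implies $f(x)R_2f(y)$;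 (ii) for every $x\in W_1$ and $R_1\in S_1$ there is $R_2\in S_2$ such that for all $u\in W_2$, if $f(x)R_2u$ then there exists $y\in W_1$ with $xR_1y$ and $f(y)=u$; an isomorphism is a bijective homomorphism. $\mathbf{MKF}_\lambda$ is the category of $\lambda$-downward directed multi-relational Kripke frames with these homomorphisms. A functor is essentially surjective if every object of the target is isomorphic to the image of some object. *)

theory Defs
  imports Main
begin

text \<open>A cardinal is a cardinal order relation (library notion Card_order).
 A regular cardinal is an infinite cardinal satisfying regularCard.
 "|X| < lambda" is (card_of X, lambda) in ordLess.\<close>

definition regular_cardinal :: "'k rel \<Rightarrow> bool" where
  "regular_cardinal k \<longleftrightarrow> Card_order k \<and> infinite (Field k) \<and> regularCard k"

definition card_less :: "'a set \<Rightarrow> 'k rel \<Rightarrow> bool" where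
  "card_less X k \<longleftrightarrow> (card_of X, k) \<in> ordLess"

text \<open>The Boolean reduct is given by its carrier and its (lattice) order;
 joins and meets are least upper / greatest lower bounds.\<close>

record 'a modal_alg =
  mcar :: "'a set"
  mle  :: "'a \<Rightarrow> 'a \<Rightarrow> bool"
  mdia :: "'a \<Rightarrow> 'a"

definition is_lub :: "'a modal_alg \<Rightarrow> 'a set \<Rightarrow> 'a \<Rightarrow> bool" where
  "is_lub M X s \<longleftrightarrow> s \<in> mcar M \<and> (\<forall>x\<in>X. mle M x s)
     \<and> (\<forall>u\<in>mcar M. (\<forall>x\<in>X. mle M x u) \<longrightarrow> mle M s u)"

definition is_glb :: "'a modal_alg \<Rightarrow> 'a set \<Rightarrow> 'a \<Rightarrow> bool" where
  "is_glb M X s \<longleftrightarrow> s \<in> mcar M \<and> (\<forall>x\<in>X. mle M s x)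
     \<and> (\<forall>u\<in>mcar M. (\<forall>x\<in>X. mle M u x) \<longrightarrow> mle M u s)"

definition msup :: "'a modal_alg \<Rightarrow> 'a set \<Rightarrow> 'a" where
  "msup M X = (THE s. is_lub M X s)"

definition minf :: "'a modal_alg \<Rightarrow> 'a set \<Rightarrow> 'a" where
  "minf M X = (THE s. is_glb M X s)"

definition mjoin :: "'a modal_alg \<Rightarrow> 'a \<Rightarrow> 'a \<Rightarrow> 'a" where
  "mjoin M x y = msup M {x, y}"

definition mmeet :: "'a modal_alg \<Rightarrow> 'a \<Rightarrow> 'a \<Rightarrow> 'a" where
  "mmeet M x y = minf M {x, y}"

definition mbot :: "'a modal_alg \<Rightarrow> 'a" where
  "mbot M = msup M {}"

definition mtop :: "'a modal_alg \<Rightarrow> 'a" where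
  "mtop M = minf M {}"

definition is_atom :: "'a modal_alg \<Rightarrow> 'a \<Rightarrow> bool" where
  "is_atom M a \<longleftrightarrow> a \<in> mcar M \<and> a \<noteq> mbot M
     \<and> (\<forall>b\<in>mcar M. mle M b a \<longrightarrow> b = mbot M \<or> b = a)"

text \<open>Complete Boolean algebra (as a complete, distributive, complemented
 lattice), atomic, with a normal additive operator.\<close>

definition cama :: "'a modal_alg \<Rightarrow> bool" where
  "cama M \<longleftrightarrow>
     (\<forall>x\<in>mcar M. mle M x x)
   \<and> (\<forall>x\<in>mcar M. \<forall>y\<in>mcar M. mle M x y \<and> mle M y x \<longrightarrow> x = y)
   \<and> (\<forall>x\<in>mcar M. \<forall>y\<in>mcar M. \<forall>z\<in>mcar M. mle M x y \<and> mle M y z \<longrightarrow> mle M x z)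
   \<and> (\<forall>X. X \<subseteq> mcar M \<longrightarrow> (\<exists>s. is_lub M X s))
   \<and> (\<forall>X. X \<subseteq> mcar M \<longrightarrow> (\<exists>s. is_glb M X s))
   \<and> (\<forall>x\<in>mcar M. \<forall>y\<in>mcar M. \<forall>z\<in>mcar M.
         mmeet M x (mjoin M y z) = mjoin M (mmeet M x y) (mmeet M x z))
   \<and> (\<forall>x\<in>mcar M. \<exists>y\<in>mcar M. mjoin M x y = mtop M \<and> mmeet M x y = mbot M)
   \<and> (\<forall>x\<in>mcar M. x \<noteq> mbot M \<longrightarrow> (\<exists>a. is_atom M a \<and> mle M a x))
   \<and> (\<forall>x\<in>mcar M. mdia M x \<in> mcar M)
   \<and> mdia M (mbot M) = mbot M
   \<and> (\<forall>x\<in>mcar M. \<forall>y\<in>mcar M. mdia M (mjoin M x y) = mjoin M (mdia M x) (mdia M y))"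

definition additive :: "'k rel \<Rightarrow> 'a modal_alg \<Rightarrow> bool" where
  "additive l M \<longleftrightarrow> (\<forall>X. X \<subseteq> mcar M \<and> card_less X l \<longrightarrow>
       mdia M (msup M X) = msup M (mdia M ` X))"

definition CAMA :: "'k rel \<Rightarrow> 'a modal_alg \<Rightarrow> bool" where
  "CAMA l M \<longleftrightarrow> cama M \<and> additive l M"

definition ma_hom :: "'a modal_alg \<Rightarrow> 'b modal_alg \<Rightarrow> ('a \<Rightarrow> 'b) \<Rightarrow> bool" where
  "ma_hom M N f \<longleftrightarrow> (\<forall>x\<in>mcar M. f x \<in> mcar N)
    \<and> (\<forall>X. X \<subseteq> mcar M \<longrightarrow> f (msup M X) = msup N (f ` X))
    \<and> (\<forall>X. X \<subseteq> mcar M \<longrightarrow> f (minf M X) = minf N (f ` X))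
    \<and> (\<forall>x\<in>mcar M. f (mdia M x) = mdia N (f x))"

definition ma_iso :: "'a modal_alg \<Rightarrow> 'b modal_alg \<Rightarrow> bool" where
  "ma_iso M N \<longleftrightarrow> (\<exists>f g. ma_hom M N f \<and> ma_hom N M g
     \<and> (\<forall>x\<in>mcar M. g (f x) = x) \<and> (\<forall>y\<in>mcar N. f (g y) = y))"

definition mkf :: "'a set \<Rightarrow> ('a \<times> 'a) set set \<Rightarrow> bool" where
  "mkf W S \<longleftrightarrow> W \<noteq> {} \<and> S \<noteq> {} \<and> (\<forall>R\<in>S. R \<subseteq> W \<times> W)"

text \<open>Downward directedness; for S' empty the condition R subset of W x W
 holds since all relations are on W.\<close>
definition down_directed :: "'k rel \<Rightarrow> 'a set \<Rightarrow> ('a \<times> 'a) set set \<Rightarrow> bool" where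
  "down_directed l W S \<longleftrightarrow> (\<forall>S'. S' \<subseteq> S \<and> card_less S' l \<longrightarrow>
      (\<exists>R\<in>S. R \<subseteq> W \<times> W \<and> (\<forall>R'\<in>S'. R \<subseteq> R')))"

definition MKF :: "'k rel \<Rightarrow> 'a set \<Rightarrow> ('a \<times> 'a) set set \<Rightarrow> bool" where
  "MKF l W S \<longleftrightarrow> mkf W S \<and> down_directed l W S"

definition kf_hom :: "'a set \<Rightarrow> ('a \<times> 'a) set set \<Rightarrow> 'b set \<Rightarrow> ('b \<times> 'b) set set
     \<Rightarrow> ('a \<Rightarrow> 'b) \<Rightarrow> bool" where
  "kf_hom W1 S1 W2 S2 f \<longleftrightarrow> (\<forall>x\<in>W1. f x \<in> W2)
    \<and> (\<forall>x\<in>W1. \<forall>R2\<in>S2. \<exists>R1\<in>S1. \<forall>y\<in>W1. (x, y) \<in> R1 \<longrightarrow> (f x, f y) \<in> R2)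
    \<and> (\<forall>x\<in>W1. \<forall>R1\<in>S1. \<exists>R2\<in>S2. \<forall>u\<in>W2. (f x, u) \<in> R2 \<longrightarrow>
          (\<exists>y\<in>W1. (x, y) \<in> R1 \<and> f y = u))"

definition kf_iso :: "'a set \<Rightarrow> ('a \<times> 'a) set set \<Rightarrow> 'b set \<Rightarrow> ('b \<times> 'b) set set \<Rightarrow> bool" where
  "kf_iso W1 S1 W2 S2 \<longleftrightarrow> (\<exists>f. kf_hom W1 S1 W2 S2 f \<and> bij_betw f W1 W2)"

end

theory Submission
  imports Defs
begin

definition PA :: "'a set \<Rightarrow> ('a set \<Rightarrow> 'a set) \<Rightarrow> 'a set modal_alg" where
  "PA W D = \<lparr>mcar = Pow W, mle = (\<subseteq>), mdia = D\<rparr>"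

lemma PA_simps[simp]: "mcar (PA W D) = Pow W" "mle (PA W D) = (\<subseteq>)" "mdia (PA W D) = D"
  by (simp_all add: PA_def)

lemma PA_lub: "X \<subseteq> Pow W \<Longrightarrow> is_lub (PA W D) X (\<Union>X)"
  by (auto simp: is_lub_def)

lemma PA_msup: "X \<subseteq> Pow W \<Longrightarrow> msup (PA W D) X = \<Union>X"
  unfolding msup_def
proof (rule the_equality)
  assume X: "X \<subseteq> Pow W"
  then show "is_lub (PA W D) X (\<Union>X)" by (rule PA_lub)
  fix s assume "is_lub (PA W D) X s"
  then have "\<forall>u\<in>Pow W. (\<forall>x\<in>X. x \<subseteq> u) \<longrightarrow> s \<subseteq> u" "\<Union>X \<subseteq> s"
    unfolding is_lub_def by auto
  moreover have "\<Union>X \<in> Pow W" using X by auto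
  ultimately have "s \<subseteq> \<Union>X" "\<Union>X \<subseteq> s" by auto
  then show "s = \<Union>X" by blast
qed

lemma PA_glb: "X \<subseteq> Pow W \<Longrightarrow> is_glb (PA W D) X (W \<inter> \<Inter>X)"
  by (auto simp: is_glb_def)

lemma PA_minf: "X \<subseteq> Pow W \<Longrightarrow> minf (PA W D) X = W \<inter> \<Inter>X"
  unfolding minf_def
proof (rule the_equality)
  assume X: "X \<subseteq> Pow W"
  then show "is_glb (PA W D) X (W \<inter> \<Inter>X)" by (rule PA_glb)
  fix s assume h: "is_glb (PA W D) X s"
  then have "\<forall>u\<in>Pow W. (\<forall>x\<in>X. u \<subseteq> x) \<longrightarrow> u \<subseteq> s" unfolding is_glb_def by simp
  moreover have "W \<inter> \<Inter>X \<in> Pow W" by auto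
  moreover have "\<forall>x\<in>X. W \<inter> \<Inter>X \<subseteq> x" by blast
  ultimately have "W \<inter> \<Inter>X \<subseteq> s" by blast
  moreover have "s \<subseteq> W \<inter> \<Inter>X" using h unfolding is_glb_def by auto
  ultimately show "s = W \<inter> \<Inter>X" by blast
qed

lemma PA_join: "x \<subseteq> W \<Longrightarrow> y \<subseteq> W \<Longrightarrow> mjoin (PA W D) x y = x \<union> y"
  unfolding mjoin_def by (subst PA_msup[of _ W]) auto

lemma PA_meet: "x \<subseteq> W \<Longrightarrow> y \<subseteq> W \<Longrightarrow> mmeet (PA W D) x y = x \<inter> y"
  unfolding mmeet_def by (subst PA_minf[of _ W]) auto

lemma PA_bot: "mbot (PA W D) = {}"
  unfolding mbot_def by (subst PA_msup[of _ W]) auto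

lemma PA_top: "mtop (PA W D) = W"
  unfolding mtop_def by (subst PA_minf[of _ W]) auto

lemma PA_cama:
  assumes "\<And>x. x \<subseteq> W \<Longrightarrow> D x \<subseteq> W" "D {} = {}"
    "\<And>x y. x \<subseteq> W \<Longrightarrow> y \<subseteq> W \<Longrightarrow> D (x \<union> y) = D x \<union> D y"
  shows "cama (PA W D)"
proof -
  have atom: "is_atom (PA W D) {a}" if "a \<in> W" for a
    using that by (auto simp: is_atom_def PA_bot)
  have c1: "\<forall>X. X \<subseteq> mcar (PA W D) \<longrightarrow> (\<exists>s. is_lub (PA W D) X s)"
    using PA_lub by (metis PA_simps(1))
  have c2: "\<forall>X. X \<subseteq> mcar (PA W D) \<longrightarrow> (\<exists>s. is_glb (PA W D) X s)"
    using PA_glb by (metis PA_simps(1))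
  have c3: "\<forall>x\<in>mcar (PA W D). \<forall>y\<in>mcar (PA W D). \<forall>z\<in>mcar (PA W D).
         mmeet (PA W D) x (mjoin (PA W D) y z) = mjoin (PA W D) (mmeet (PA W D) x y) (mmeet (PA W D) x z)"
  proof (intro ballI)
    fix x y z assume "x \<in> mcar (PA W D)" "y \<in> mcar (PA W D)" "z \<in> mcar (PA W D)"
    then have h: "x \<subseteq> W" "y \<subseteq> W" "z \<subseteq> W" by auto
    then have "y \<union> z \<subseteq> W" "x \<inter> y \<subseteq> W" "x \<inter> z \<subseteq> W" by auto
    with h show "mmeet (PA W D) x (mjoin (PA W D) y z) = mjoin (PA W D) (mmeet (PA W D) x y) (mmeet (PA W D) x z)"
      by (simp add: PA_join PA_meet Int_Un_distrib)
  qed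
  have c4: "\<forall>x\<in>mcar (PA W D). \<exists>y\<in>mcar (PA W D). mjoin (PA W D) x y = mtop (PA W D) \<and> mmeet (PA W D) x y = mbot (PA W D)"
  proof
    fix x assume "x \<in> mcar (PA W D)"
    then have h: "x \<subseteq> W" by auto
    have "mjoin (PA W D) x (W - x) = W" "mmeet (PA W D) x (W - x) = {}"
      using h by (auto simp: PA_join PA_meet)
    then show "\<exists>y\<in>mcar (PA W D). mjoin (PA W D) x y = mtop (PA W D) \<and> mmeet (PA W D) x y = mbot (PA W D)"
      by (intro bexI[of _ "W - x"]) (auto simp: PA_top PA_bot)
  qed
  have c5: "\<forall>x\<in>mcar (PA W D). x \<noteq> mbot (PA W D) \<longrightarrow> (\<exists>a. is_atom (PA W D) a \<and> mle (PA W D) a x)"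
  proof (intro ballI impI)
    fix x assume "x \<in> mcar (PA W D)" "x \<noteq> mbot (PA W D)"
    then obtain a where "a \<in> x" "x \<subseteq> W" by (auto simp: PA_bot)
    then show "\<exists>a. is_atom (PA W D) a \<and> mle (PA W D) a x"
      using atom[of a] by auto
  qed
  have c6: "\<forall>x\<in>mcar (PA W D). \<forall>y\<in>mcar (PA W D). mdia (PA W D) (mjoin (PA W D) x y) = mjoin (PA W D) (mdia (PA W D) x) (mdia (PA W D) y)"
    using assms by (simp add: PA_join)
  show ?thesis
    unfolding cama_def
    using c1 c2 c3 c4 c5 c6 assms(1,2) by (auto simp: PA_bot)
qed


lemma cama_anti: "cama M \<Longrightarrow> \<forall>x\<in>mcar M. \<forall>y\<in>mcar M. mle M x y \<and> mle M y x \<longrightarrow> x = y"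
  unfolding cama_def by (elim conjE) assumption
lemma cama_lubex: "cama M \<Longrightarrow> \<forall>X. X \<subseteq> mcar M \<longrightarrow> (\<exists>s. is_lub M X s)"
  unfolding cama_def by (elim conjE) assumption
lemma cama_dia: "cama M \<Longrightarrow> \<forall>x\<in>mcar M. mdia M x \<in> mcar M"
  unfolding cama_def by (elim conjE) assumption

lemma cama_lub:
  assumes "cama M" "X \<subseteq> mcar M"
  shows "is_lub M X (msup M X)"
proof -
  obtain s where s: "is_lub M X s" using cama_lubex[OF assms(1)] assms(2) by blast
  have anti: "\<forall>x\<in>mcar M. \<forall>y\<in>mcar M. mle M x y \<and> mle M y x \<longrightarrow> x = y"
    using cama_anti[OF assms(1)] .
  have "msup M X = s" unfolding msup_def
  proof (rule the_equality)
    show "is_lub M X s" by (rule s)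
    fix t assume t: "is_lub M X t"
    have s1: "s \<in> mcar M" "\<forall>x\<in>X. mle M x s" "\<forall>u\<in>mcar M. (\<forall>x\<in>X. mle M x u) \<longrightarrow> mle M s u"
      using s unfolding is_lub_def by auto
    have t1: "t \<in> mcar M" "\<forall>x\<in>X. mle M x t" "\<forall>u\<in>mcar M. (\<forall>x\<in>X. mle M x u) \<longrightarrow> mle M t u"
      using t unfolding is_lub_def by auto
    have "mle M t s" using t1(3) s1(1,2) by blast
    moreover have "mle M s t" using s1(3) t1(1,2) by blast
    ultimately show "t = s" using anti s1(1) t1(1) by blast
  qed
  then show ?thesis using s by simp
qed

lemma iso_additive:
  assumes M: "cama M" and iso: "ma_iso M N" and addN: "additive l N"
  shows "additive l M"
  unfolding additive_def
proof (intro allI impI)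
  fix X assume X: "X \<subseteq> mcar M \<and> card_less X l"
  obtain f g where hf: "ma_hom M N f" and hg: "ma_hom N M g"
    and gf: "\<forall>x\<in>mcar M. g (f x) = x" using iso unfolding ma_iso_def by blast
  have dia_car: "\<forall>x\<in>mcar M. mdia M x \<in> mcar M" using cama_dia[OF M] .
  have sX: "msup M X \<in> mcar M" using cama_lub[OF M] X unfolding is_lub_def by blast
  have dX: "mdia M ` X \<subseteq> mcar M" using dia_car X by blast
  have sdX: "msup M (mdia M ` X) \<in> mcar M" using cama_lub[OF M dX] unfolding is_lub_def by blast
  have fX: "f ` X \<subseteq> mcar N" using hf X unfolding ma_hom_def by blast
  have cfX: "card_less (f ` X) l" using X unfolding card_less_def
    using card_of_image ordLeq_ordLess_trans by blast
  have fdia: "\<forall>x\<in>mcar M. f (mdia M x) = mdia N (f x)" using hf unfolding ma_hom_def by blast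
  have fsup: "\<forall>Y. Y \<subseteq> mcar M \<longrightarrow> f (msup M Y) = msup N (f ` Y)" using hf unfolding ma_hom_def by blast
  have "f (mdia M (msup M X)) = mdia N (f (msup M X))" using fdia sX by blast
  also have "\<dots> = mdia N (msup N (f ` X))" using fsup X by simp
  also have "\<dots> = msup N (mdia N ` f ` X)" using addN fX cfX unfolding additive_def by blast
  also have "mdia N ` f ` X = f ` mdia M ` X" unfolding image_image
  proof (rule image_cong[OF refl])
    fix x assume "x \<in> X" then show "mdia N (f x) = f (mdia M x)" using fdia X by auto
  qed
  also have "msup N (f ` mdia M ` X) = f (msup M (mdia M ` X))" using fsup dX by simp
  finally have "f (mdia M (msup M X)) = f (msup M (mdia M ` X))" .
  then have "g (f (mdia M (msup M X))) = g (f (msup M (mdia M ` X)))" by simp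
  then show "mdia M (msup M X) = msup M (mdia M ` X)"
    using gf dia_car[rule_format, OF sX] sdX by metis
qed


locale regk =
  fixes k :: "'k rel"
  assumes reg: "regular_cardinal k"
begin

lemma co: "Card_order k" and inf: "infinite (Field k)" and st: "stable k"
  using reg regularCard_stable unfolding regular_cardinal_def by auto

lemma small_finite: "finite (X::'a set) \<Longrightarrow> card_less X k"
  unfolding card_less_def
  using finite_ordLess_infinite[OF card_of_Well_order card_order_on_well_order_on[OF co]] inf
  by (simp add: Field_card_of)

lemma small_mono: "X \<subseteq> Y \<Longrightarrow> card_less Y k \<Longrightarrow> card_less X k"
  unfolding card_less_def using card_of_mono1 ordLeq_ordLess_trans by blast

lemma small_Un: "card_less X k \<Longrightarrow> card_less Y k \<Longrightarrow> card_less (X \<union> Y) k"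
  unfolding card_less_def using card_of_Un_ordLess_infinite_Field inf co by blast

lemma W_not_small: "\<not> card_less (Field k) k"
  unfolding card_less_def using card_of_Field_ordIso[OF co] not_ordLess_ordIso by blast

lemma small_UN: "card_less I k \<Longrightarrow> (\<And>i. i \<in> I \<Longrightarrow> card_less (A i) k) \<Longrightarrow> card_less (\<Union>(A ` I)) k"
  unfolding card_less_def using card_of_UNION_ordLess_infinite_Field[OF st co] by blast

lemma W_ne: "Field k \<noteq> {}" using inf by auto

lemma less_k': "(k, k') \<in> ordLess \<Longrightarrow> X \<subseteq> Field k \<Longrightarrow> card_less (f ` X) k'"
  unfolding card_less_def
proof -
  assume kk: "(k, k') \<in> ordLess" and X: "X \<subseteq> Field k"
  have "(card_of (f ` X), card_of X) \<in> ordLeq" by (rule card_of_image)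
  moreover have "(card_of X, card_of (Field k)) \<in> ordLeq" using X by (rule card_of_mono1)
  moreover have "(card_of (Field k), k) \<in> ordIso" by (rule card_of_Field_ordIso[OF co])
  ultimately have "(card_of (f ` X), k) \<in> ordLeq"
    using ordLeq_transitive ordLeq_ordIso_trans by blast
  then show "(card_of (f ` X), k') \<in> ordLess" using kk ordLeq_ordLess_trans by blast
qed

definition Dk :: "'k set \<Rightarrow> 'k set" where
  "Dk X = (if card_less X k then {} else Field k)"

definition Mk where "Mk = PA (Field k) Dk"

lemma Mk_cama: "cama Mk"
  unfolding Mk_def
proof (rule PA_cama)
  show "\<And>x. x \<subseteq> Field k \<Longrightarrow> Dk x \<subseteq> Field k" by (simp add: Dk_def)
  show "Dk {} = {}" using small_finite[of "{}::'k set"] by (simp add: Dk_def)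
  fix x y :: "'k set"
  show "Dk (x \<union> y) = Dk x \<union> Dk y"
    using small_Un[of x y] small_mono[of x "x \<union> y"] small_mono[of y "x \<union> y"]
    by (auto simp: Dk_def)
qed

lemma Mk_add: "additive k Mk"
  unfolding additive_def
proof (intro allI impI)
  fix X assume X: "X \<subseteq> mcar Mk \<and> card_less X k"
  then have XP: "X \<subseteq> Pow (Field k)" by (simp add: Mk_def)
  have DP: "mdia Mk ` X \<subseteq> Pow (Field k)" by (auto simp: Mk_def Dk_def)
  have e1: "msup Mk X = \<Union>X" unfolding Mk_def by (rule PA_msup[OF XP])
  have e2: "msup Mk (mdia Mk ` X) = \<Union>(Dk ` X)" using PA_msup[OF DP] by (simp add: Mk_def)
  show "mdia Mk (msup Mk X) = msup Mk (mdia Mk ` X)"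
  proof (cases "\<forall>x\<in>X. card_less x k")
    case True
    then have "card_less (\<Union>(id ` X)) k" using small_UN[of X id] X by auto
    then show ?thesis using True unfolding e1 e2 by (simp add: Mk_def Dk_def)
  next
    case False
    then obtain x where x: "x \<in> X" "\<not> card_less x k" by blast
    then have "\<not> card_less (\<Union>X) k" using small_mono[of x "\<Union>X"] by blast
    moreover have "\<Union>(Dk ` X) = Field k" using x XP by (auto simp: Dk_def split: if_splits)
    ultimately show ?thesis unfolding e1 e2 by (simp add: Mk_def Dk_def)
  qed
qed

lemma Mk_not_add: "(k, k') \<in> ordLess \<Longrightarrow> \<not> additive k' Mk"
proof
  assume kk: "(k, k') \<in> ordLess" and a: "additive k' Mk"
  let ?Y = "(\<lambda>a. {a}) ` Field k"
  have Y: "?Y \<subseteq> mcar Mk" by (auto simp: Mk_def)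
  have cY: "card_less ?Y k'" by (rule less_k'[OF kk subset_refl])
  have "\<Union>?Y = Field k" by auto
  then have "msup Mk ?Y = Field k" using PA_msup[of ?Y "Field k" Dk] by (auto simp: Mk_def)
  then have l: "mdia Mk (msup Mk ?Y) = Field k"
    using W_not_small by (simp add: Mk_def Dk_def)
  have sing: "\<And>a::'k. card_less {a} k" by (rule small_finite) simp
  have "mdia Mk ` ?Y = {{}}"
  proof -
    have "mdia Mk ` ?Y = (\<lambda>a. Dk {a}) ` Field k" by (auto simp: Mk_def)
    also have "\<dots> = (\<lambda>a. {}) ` Field k" using sing by (simp add: Dk_def)
    also have "\<dots> = {{}}" using W_ne by auto
    finally show ?thesis .
  qed
  then have r: "msup Mk (mdia Mk ` ?Y) = {}"
    using PA_msup[of "{{}}" "Field k" Dk] by (simp add: Mk_def)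
  from a Y cY have "mdia Mk (msup Mk ?Y) = msup Mk (mdia Mk ` ?Y)" unfolding additive_def by blast
  with l r W_ne show False by simp
qed

definition Sk :: "('k \<times> 'k) set set" where
  "Sk = {Field k \<times> (Field k - A) | A. A \<subseteq> Field k \<and> card_less A k}"

lemma Sk_range: "A \<subseteq> Field k \<Longrightarrow> Field k - Range (Field k \<times> (Field k - A)) = A"
proof -
  assume A: "A \<subseteq> Field k"
  have "Range (Field k \<times> (Field k - A)) = snd ` (Field k \<times> (Field k - A))" by (rule Range_snd)
  also have "\<dots> = Field k - A" using W_ne by simp
  finally show ?thesis using A by blast
qed

lemma Sk_memI: "A \<subseteq> Field k \<Longrightarrow> card_less A k \<Longrightarrow> Field k \<times> (Field k - A) \<in> Sk"
  unfolding Sk_def by blast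

lemma Sk_memE: "R \<in> Sk \<Longrightarrow> (\<And>A. R = Field k \<times> (Field k - A) \<Longrightarrow> A \<subseteq> Field k \<Longrightarrow> card_less A k \<Longrightarrow> P) \<Longrightarrow> P"
  unfolding Sk_def by blast

lemma Sk_sub: "R \<in> Sk \<Longrightarrow> R \<subseteq> Field k \<times> Field k"
  by (erule Sk_memE) auto

lemma MKF_Sk: "MKF k (Field k) Sk"
  unfolding MKF_def
proof
  have "Field k \<times> (Field k - {}) \<in> Sk" by (rule Sk_memI) (auto intro: small_finite)
  then have "Sk \<noteq> {}" by blast
  then show "mkf (Field k) Sk" unfolding mkf_def using W_ne Sk_sub by blast
  show "down_directed k (Field k) Sk"
    unfolding down_directed_def
  proof (intro allI impI)
    fix S' assume S': "S' \<subseteq> Sk \<and> card_less S' k"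
    define B where "B = \<Union>((\<lambda>R. Field k - Range R) ` S')"
    have "card_less B k" unfolding B_def
    proof (rule small_UN)
      show "card_less S' k" using S' by blast
      fix R assume "R \<in> S'"
      then have "R \<in> Sk" using S' by blast
      then show "card_less (Field k - Range R) k"
        by (rule Sk_memE) (simp add: Sk_range)
    qed
    moreover have "B \<subseteq> Field k" unfolding B_def by blast
    ultimately have mem: "Field k \<times> (Field k - B) \<in> Sk" by (rule Sk_memI[rotated])
    have "\<forall>R'\<in>S'. Field k \<times> (Field k - B) \<subseteq> R'"
    proof
      fix R assume R: "R \<in> S'"
      then have "R \<in> Sk" using S' by blast
      then obtain A where A: "R = Field k \<times> (Field k - A)" "A \<subseteq> Field k"
        by (rule Sk_memE)
      have "Field k - Range R \<subseteq> B" unfolding B_def using R by blast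
      then have "A \<subseteq> B" using Sk_range[OF A(2)] A(1) by simp
      then show "Field k \<times> (Field k - B) \<subseteq> R" using A(1) by blast
    qed
    with mem Sk_sub[OF mem] show "\<exists>R\<in>Sk. R \<subseteq> Field k \<times> Field k \<and> (\<forall>R'\<in>S'. R \<subseteq> R')" by blast
  qed
qed

lemma Sk_not_iso:
  assumes kk: "(k, k') \<in> ordLess" and M: "MKF k' (W' :: 'c set) S'"
  shows "\<not> kf_iso (Field k) Sk W' S'"
proof
  assume "kf_iso (Field k) Sk W' S'"
  then obtain f where hf: "kf_hom (Field k) Sk W' S' f" and bij: "bij_betw f (Field k) W'"
    unfolding kf_iso_def by blast
  have hom1: "\<forall>x\<in>Field k. \<forall>R2\<in>S'. \<exists>R1\<in>Sk. \<forall>y\<in>Field k. (x, y) \<in> R1 \<longrightarrow> (f x, f y) \<in> R2"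
    using hf unfolding kf_hom_def by (elim conjE)
  have hom2: "\<forall>x\<in>Field k. \<forall>R1\<in>Sk. \<exists>R2\<in>S'. \<forall>u\<in>W'. (f x, u) \<in> R2 \<longrightarrow> (\<exists>y\<in>Field k. (x, y) \<in> R1 \<and> f y = u)"
    using hf unfolding kf_hom_def by (elim conjE)
  obtain x where x: "x \<in> Field k" using W_ne by blast
  have Ra: "Field k \<times> (Field k - {a}) \<in> Sk" if "a \<in> Field k" for a
    by (rule Sk_memI) (use that in \<open>auto intro: small_finite\<close>)
  have ex: "\<exists>R2. R2 \<in> S' \<and> (\<forall>u\<in>W'. (f x, u) \<in> R2 \<longrightarrow> (\<exists>y\<in>Field k. y \<noteq> a \<and> f y = u))"
    if a: "a \<in> Field k" for a
  proof -
    from hom2 x Ra[OF a] obtain R2 where "R2 \<in> S'"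
      "\<forall>u\<in>W'. (f x, u) \<in> R2 \<longrightarrow> (\<exists>y\<in>Field k. (x, y) \<in> Field k \<times> (Field k - {a}) \<and> f y = u)"
      by blast
    then show ?thesis by blast
  qed
  then have "\<forall>a\<in>Field k. \<exists>R2. R2 \<in> S' \<and> (\<forall>u\<in>W'. (f x, u) \<in> R2 \<longrightarrow> (\<exists>y\<in>Field k. y \<noteq> a \<and> f y = u))"
    by blast
  then obtain g where g: "\<forall>a\<in>Field k. g a \<in> S' \<and> (\<forall>u\<in>W'. (f x, u) \<in> g a \<longrightarrow> (\<exists>y\<in>Field k. y \<noteq> a \<and> f y = u))"
    by (rule bchoice[THEN exE])
  have gS: "g ` Field k \<subseteq> S'" using g by blast
  have cg: "card_less (g ` Field k) k'" by (rule less_k'[OF kk subset_refl])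
  have dd: "down_directed k' W' S'" using M unfolding MKF_def by simp
  have "\<exists>R\<in>S'. R \<subseteq> W' \<times> W' \<and> (\<forall>R'\<in>g ` Field k. R \<subseteq> R')"
    using dd[unfolded down_directed_def, rule_format, OF conjI[OF gS cg]] .
  then obtain R where R: "R \<in> S'" "R \<subseteq> W' \<times> W'" "\<forall>R'\<in>g ` Field k. R \<subseteq> R'"
    by (elim bexE conjE)
  have "\<exists>R1\<in>Sk. \<forall>y\<in>Field k. (x, y) \<in> R1 \<longrightarrow> (f x, f y) \<in> R"
    using hom1 x R(1) by simp
  then obtain R1 where R1: "R1 \<in> Sk" "\<forall>y\<in>Field k. (x, y) \<in> R1 \<longrightarrow> (f x, f y) \<in> R"
    by (elim bexE)
  from R1(1) obtain A where A: "R1 = Field k \<times> (Field k - A)" "card_less A k"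
    by (rule Sk_memE)
  have "\<not> Field k \<subseteq> A"
  proof
    assume "Field k \<subseteq> A"
    then have "card_less (Field k) k" by (rule small_mono) (rule A(2))
    then show False using W_not_small by simp
  qed
  then obtain y where y: "y \<in> Field k" "y \<notin> A" by blast
  then have "(x, y) \<in> R1" using A(1) x by simp
  then have "(f x, f y) \<in> R" using R1(2) y(1) by blast
  moreover have "R \<subseteq> g y" using R(3) y(1) by blast
  ultimately have fy: "(f x, f y) \<in> g y" by blast
  moreover have "f y \<in> W'" using bij y unfolding bij_betw_def by blast
  ultimately obtain y' where "y' \<in> Field k" "y' \<noteq> y" "f y' = f y" using g y(1) by blast
  then show False using bij y(1) unfolding bij_betw_def inj_on_def by blast
qed

end

theorem main:
  fixes k :: "'k rel" and k' :: "'l rel"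
  assumes "regular_cardinal k" and "regular_cardinal k'" and "(k, k') \<in> ordLess"
  shows "(\<exists>M :: 'k set modal_alg. CAMA k M \<and>
            (\<forall>N :: 'b modal_alg. CAMA k' N \<longrightarrow> \<not> ma_iso M N))
       \<and> (\<exists>(W :: 'k set) S. MKF k W S \<and>
            (\<forall>(W' :: 'c set) S'. MKF k' W' S' \<longrightarrow> \<not> kf_iso W S W' S'))"
proof
  interpret regk k by (rule regk.intro) (rule assms(1))
  show "\<exists>M :: 'k set modal_alg. CAMA k M \<and> (\<forall>N :: 'b modal_alg. CAMA k' N \<longrightarrow> \<not> ma_iso M N)"
  proof (intro exI conjI allI impI)
    show "CAMA k Mk" unfolding CAMA_def using Mk_cama Mk_add by blast
    fix N :: "'b modal_alg" assume "CAMA k' N"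
    then have "additive k' N" unfolding CAMA_def by blast
    then show "\<not> ma_iso Mk N" using iso_additive[OF Mk_cama] Mk_not_add[OF assms(3)] by blast
  qed
  show "\<exists>(W :: 'k set) S. MKF k W S \<and> (\<forall>(W' :: 'c set) S'. MKF k' W' S' \<longrightarrow> \<not> kf_iso W S W' S')"
    using MKF_Sk Sk_not_iso[OF assms(3)] by blast
qed


theorem theorem10p2:
  fixes k :: "'k rel" and k' :: "'l rel"
  assumes "regular_cardinal k" and "regular_cardinal k'" and "(k, k') \<in> ordLess"
  shows "(\<exists>M :: 'k set modal_alg. CAMA k M \<and>
            (\<forall>N :: 'b modal_alg. CAMA k' N \<longrightarrow> \<not> ma_iso M N))
       \<and> (\<exists>(W :: 'k set) S. MKF k W S \<and>
            (\<forall>(W' :: 'c set) S'. MKF k' W' S' \<longrightarrow> \<not> kf_iso W S W' S'))"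
  by (rule main) (rule assms)+

end
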